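(* For every $p\ge1$, the operator $T$ defined on measurable functions $u$ on $[0,1]$ by $Tu(x)=x\,u(\tfrac1x-m)$ for $x\in(\tfrac1{m+1},\tfrac1m]$, $m\ge1$ (i.e. $Tu(x)=x\,u(\{1/x\})$, $\{\cdot\}$ the fractional part), is a bounded operator on $L^p\big([0,1],\tfrac{dx}{2\sqrt{x(1-x)}}\big)$, and its spectral radius on this space is at most $(\sqrt5-1)/2$. *)

theory Defs
  imports "HOL-Analysis.Analysis"
begin

definition mu :: "real measure" where
  "mu = density lborel
     (\<lambda>x. ennreal (indicator {0..1} x / (2 * sqrt (x * (1 - x)))))"

text \<open>The operator T u (x) = x u({1/x}) for x in (0,1]; complex scalars
  (spectral theory is done over the complex field).\<close>
definition Top :: "(real \<Rightarrow> complex) \<Rightarrow> real \<Rightarrow> complex" where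
  "Top u x = (if 0 < x \<and> x \<le> 1 then complex_of_real x * u (frac (1 / x)) else 0)"

definition in_Lp :: "real \<Rightarrow> (real \<Rightarrow> complex) \<Rightarrow> bool" where
  "in_Lp p u \<longleftrightarrow> u \<in> borel_measurable mu \<and>
     (\<integral>\<^sup>+ x. ennreal (cmod (u x) powr p) \<partial>mu) < \<infinity>"

definition Lp_norm :: "real \<Rightarrow> (real \<Rightarrow> complex) \<Rightarrow> real" where
  "Lp_norm p u = (enn2real (\<integral>\<^sup>+ x. ennreal (cmod (u x) powr p) \<partial>mu)) powr (1 / p)"

definition bounded_on_Lp :: "real \<Rightarrow> ((real \<Rightarrow> complex) \<Rightarrow> real \<Rightarrow> complex) \<Rightarrow> bool" where
  "bounded_on_Lp p S \<longleftrightarrow> (\<exists>C. \<forall>u. in_Lp p u \<longrightarrow>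
      in_Lp p (S u) \<and> Lp_norm p (S u) \<le> C * Lp_norm p u)"

text \<open>S is invertible on L^p(mu), with functions identified a.e.: injective modulo
  null functions and surjective modulo a.e. equality (the inverse is then bounded
  by the open mapping theorem).\<close>
definition invertible_on_Lp :: "real \<Rightarrow> ((real \<Rightarrow> complex) \<Rightarrow> real \<Rightarrow> complex) \<Rightarrow> bool" where
  "invertible_on_Lp p S \<longleftrightarrow>
     (\<forall>u. in_Lp p u \<and> (AE x in mu. S u x = 0) \<longrightarrow> (AE x in mu. u x = 0)) \<and>
     (\<forall>f. in_Lp p f \<longrightarrow> (\<exists>u. in_Lp p u \<and> (AE x in mu. S u x = f x)))"

definition Lp_spectrum :: "real \<Rightarrow> ((real \<Rightarrow> complex) \<Rightarrow> real \<Rightarrow> complex) \<Rightarrow> complex set" where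
  "Lp_spectrum p S = {l. \<not> invertible_on_Lp p (\<lambda>u x. S u x - l * u x)}"

definition Lp_spectral_radius :: "real \<Rightarrow> ((real \<Rightarrow> complex) \<Rightarrow> real \<Rightarrow> complex) \<Rightarrow> ereal" where
  "Lp_spectral_radius p S = (SUP l\<in>Lp_spectrum p S. ereal (cmod l))"

end

theory Submission
  imports Defs
begin

definition gg :: real where "gg = (sqrt 5 - 1) / 2"

lemma gg_sq: "gg * gg = 1 - gg"
proof -
  have "sqrt 5 * sqrt 5 = 5" by simp
  then show ?thesis unfolding gg_def by (simp add: field_simps)
qed

lemma gg_lo: "309/500 \<le> gg"
proof -
  have "2236/1000 \<le> sqrt 5" by (rule real_le_rsqrt) (simp add: power2_eq_square)
  then show ?thesis unfolding gg_def by simp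
qed

lemma gg_hi: "gg \<le> 6181/10000"
proof -
  have "sqrt 5 \<le> 22362/10000" by (rule real_le_lsqrt) (auto simp add: power2_eq_square)
  then show ?thesis unfolding gg_def by simp
qed

lemma gg_pos: "0 < gg" using gg_lo by simp

lemma gg_inv: "gg * (1 + gg) = 1" using gg_sq by (simp add: algebra_simps)

lemma gg_sq2: "gg * (gg * z) = (1 - gg) * z"
  using gg_sq by (simp add: mult.assoc[symmetric])

definition eta :: "real \<Rightarrow> real" where "eta x = 1 + (x - gg)^2"

definition chi :: "real \<Rightarrow> real" where
  "chi x = (if 0 \<le> x \<and> x \<le> 1 then eta x / (1 + gg + x) else 1/2)"

lemma eta_ge1: "1 \<le> eta x" unfolding eta_def by simp

lemma chi_bounds: "1/3 \<le> chi x \<and> chi x \<le> 1"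
proof (cases "0 \<le> x \<and> x \<le> 1")
  case True
  have d: "0 < 1 + gg + x" using gg_pos True by simp
  have e1: "1 \<le> eta x" by (rule eta_ge1)
  have "(x - gg)^2 \<le> (1/2)" 
  proof -
    have "\<bar>x - gg\<bar> \<le> 7/10" unfolding abs_le_iff using True gg_lo gg_hi by linarith
    then have "\<bar>x - gg\<bar>^2 \<le> (7/10)^2" by (rule power_mono) simp
    then show ?thesis by (simp add: power2_eq_square)
  qed
  then have e2: "eta x \<le> 3/2" unfolding eta_def by simp
  have "1/3 \<le> eta x / (1 + gg + x)"
    using d e1 True gg_hi by (simp add: field_simps)
  moreover have "eta x / (1 + gg + x) \<le> 1"
    using d e2 True gg_lo by (simp add: field_simps)
  ultimately show ?thesis using True unfolding chi_def by simp
next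
  case False
  then have "chi x = 1/2" unfolding chi_def by auto
  then show ?thesis by simp
qed

lemma chi_pos: "0 < chi x" using chi_bounds[of x] by linarith

definition Rr :: "real \<Rightarrow> real \<Rightarrow> real" where
  "Rr n y = (1 / (n + y)) * chi (1 / (n + y)) / (gg * chi y)"

lemma Rr_eq:
  assumes n: "1 \<le> n" and y: "0 \<le> y" "y \<le> 1"
  shows "Rr n y = eta (1/(n+y)) * (1 + gg + y) / ((n + y + gg) * eta y)"
proof -
  have p: "0 < n + y" using n y by simp
  have x1: "0 \<le> 1/(n+y)" "1/(n+y) \<le> 1" using n y p by (auto simp: field_simps)
  have cx: "chi (1/(n+y)) = eta (1/(n+y)) / (1 + gg + 1/(n+y))" using x1 unfolding chi_def by simp
  have cy: "chi y = eta y / (1 + gg + y)" using y unfolding chi_def by simp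
  have e1: "0 < eta (1/(n+y))" "0 < eta y" using eta_ge1 by (auto intro: less_le_trans[OF zero_less_one])
  define ex where "ex = eta (1/(n+y))"
  define ey where "ey = eta y"
  have q: "0 < (1+gg)*(n+y)+1" using p gg_pos by (simp add: add_pos_pos)
  have C: "1+gg+1/(n+y) = ((1+gg)*(n+y)+1)/(n+y)" using p by (simp add: field_simps)
  have A: "(1/(n+y)) * (ex / (1+gg+1/(n+y))) = ex / ((1+gg)*(n+y)+1)"
    unfolding C using p q by simp
  have B: "gg*((1+gg)*(n+y)+1) = n+y+gg"
  proof -
    have "gg*((1+gg)*(n+y)+1) = (gg*(1+gg))*(n+y)+gg" by (simp add: algebra_simps)
    then show ?thesis using gg_inv by simp
  qed
  have "Rr n y = ((1/(n+y)) * (ex / (1+gg+1/(n+y)))) / (gg * (ey / (1+gg+y)))"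
    unfolding Rr_def cx cy ex_def ey_def by simp
  also have "\<dots> = ex / ((1+gg)*(n+y)+1) / (gg * (ey / (1+gg+y)))" by (simp only: A)
  also have "\<dots> = ex * (1+gg+y) / ((gg*((1+gg)*(n+y)+1)) * ey)"
    using q e1 gg_pos y by (simp add: field_simps ey_def)
  also have "\<dots> = ex * (1+gg+y) / ((n+y+gg) * ey)" using B by simp
  finally show ?thesis unfolding ex_def ey_def .
qed

lemma eta_x1:
  assumes "0 \<le> y"
  shows "eta (1/(1+y)) = 1 + gg*gg*(y-gg)^2/(1+y)^2"
proof -
  have p: "0 < 1 + y" using assms by simp
  have "1/(1+y) - gg = gg*(gg - y)/(1+y)"
    using p gg_sq by (simp add: field_simps)
  then have "(1/(1+y) - gg)^2 = gg*gg*(y-gg)^2/(1+y)^2"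
    by (simp add: power2_eq_square field_simps)
  then show ?thesis unfolding eta_def by simp
qed

lemma sq_le_of_abs: "\<bar>a::real\<bar> \<le> b \<Longrightarrow> a^2 \<le> b^2"
  by (metis abs_ge_zero order_trans power2_abs power_mono)

lemma Rr_le1:
  assumes n: "1 \<le> n" and y: "0 \<le> y" "y \<le> 1"
  shows "0 \<le> Rr (real n) y \<and> Rr (real n) y \<le> 1"
proof -
  define ex where "ex = eta (1/(real n+y))"
  define ey where "ey = eta y"
  have R: "Rr (real n) y = ex * (1 + gg + y) / ((real n + y + gg) * ey)"
    using Rr_eq[of "real n" y] n y unfolding ex_def ey_def by simp
  have ex1: "1 \<le> ex" "1 \<le> ey" unfolding ex_def ey_def by (auto intro: eta_ge1)
  have d: "0 < (real n + y + gg) * ey" using gg_pos n y ex1 by (intro mult_pos_pos) auto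
  have key: "ex * (1 + gg + y) \<le> (real n + y + gg) * ey"
  proof (cases "n = 1")
    case True
    have "gg*gg*(y-gg)^2/(1+y)^2 \<le> (y-gg)^2"
    proof -
      have "gg*gg \<le> 1" using gg_lo gg_hi by (simp add: power_le_one mult_le_one)
      moreover have "1 \<le> (1+y)^2" using y by (simp add: power_le_one_iff one_le_power)
      ultimately have "gg*gg*(y-gg)^2 \<le> (1+y)^2 * (y-gg)^2"
        by (intro mult_mono) auto
      then show ?thesis using y by (simp add: field_simps)
    qed
    then have "ex \<le> ey" unfolding ex_def ey_def using True y eta_x1[of y]
      by (simp add: eta_def add.commute)
    then have "ex * (1 + gg + y) \<le> ey * (1 + gg + y)"
      using gg_pos y by (intro mult_right_mono) auto
    then show ?thesis using True by (simp add: algebra_simps)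
  next
    case False
    show ?thesis
    proof (cases "n = 2")
      case True
      have x: "1/3 \<le> 1/(2+y)" "1/(2+y) \<le> 1/2" using y by (auto simp: field_simps)
      have "\<bar>1/(2+y) - gg\<bar> \<le> 2848/10000"
        unfolding abs_le_iff using x gg_lo gg_hi by linarith
      from sq_le_of_abs[OF this] have "ex \<le> 1 + (2848/10000)^2"
        unfolding ex_def eta_def using True by simp
      then have "ex \<le> 10812/10000" by (simp add: power2_eq_square)
      then have "ex * (1 + gg + y) \<le> 10812/10000 * (1 + gg + y)"
        using gg_pos y by (intro mult_right_mono) auto
      also have "\<dots> \<le> (2 + y + gg)" using y gg_lo gg_hi by simp
      also have "\<dots> \<le> (2 + y + gg) * ey" using ex1 gg_pos y by simp
      finally show ?thesis using True by simp
    next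
      case False2: False
      then have n3: "3 \<le> real n" using n \<open>n \<noteq> 1\<close> by simp
      have x: "0 \<le> 1/(real n+y)" "1/(real n+y) \<le> 1/3" using y n3 by (auto simp: field_simps)
      have "\<bar>1/(real n+y) - gg\<bar> \<le> 6181/10000"
        unfolding abs_le_iff using x gg_lo gg_hi by linarith
      from sq_le_of_abs[OF this] have "ex \<le> 1 + (6181/10000)^2"
        unfolding ex_def eta_def by simp
      then have "ex \<le> 13821/10000" by (simp add: power2_eq_square)
      then have "ex * (1 + gg + y) \<le> 13821/10000 * (1 + gg + y)"
        using gg_pos y by (intro mult_right_mono) auto
      also have "\<dots> \<le> (real n + y + gg)" using y gg_lo gg_hi n3 by simp
      also have "\<dots> \<le> (real n + y + gg) * ey" using ex1 gg_pos y n3 by simp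
      finally show ?thesis .
    qed
  qed
  have "0 \<le> Rr (real n) y" unfolding R using ex1 d gg_pos y by simp
  moreover have "Rr (real n) y \<le> 1" unfolding R using key d by simp
  ultimately show ?thesis by simp
qed

lemma eta_x2_le: assumes "0 \<le> y" "y \<le> 1" shows "eta (1/(2+y)) \<le> 10812/10000"
proof -
  have x: "1/3 \<le> 1/(2+y)" "1/(2+y) \<le> 1/2" using assms by (auto simp: field_simps)
  have "\<bar>1/(2+y) - gg\<bar> \<le> 2848/10000"
    unfolding abs_le_iff using x gg_lo gg_hi by linarith
  from sq_le_of_abs[OF this] have "eta (1/(2+y)) \<le> 1 + (2848/10000)^2"
    unfolding eta_def by simp
  then show ?thesis by (simp add: power2_eq_square)
qed

lemma eta_xn_le: assumes "3 \<le> n" "0 \<le> y" shows "eta (1/(n+y)) \<le> 13821/10000"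
proof -
  have x: "0 \<le> 1/(n+y)" "1/(n+y) \<le> 1/3" using assms by (auto simp: field_simps)
  have "\<bar>1/(n+y) - gg\<bar> \<le> 6181/10000"
    unfolding abs_le_iff using x gg_lo gg_hi by linarith
  from sq_le_of_abs[OF this] have "eta (1/(n+y)) \<le> 1 + (6181/10000)^2"
    unfolding eta_def by simp
  then show ?thesis by (simp add: power2_eq_square)
qed

lemma cert_le:
  fixes A B C k :: real
  assumes "0 < k" "k * (A - B) = C" "0 \<le> C"
  shows "B \<le> A"
proof -
  have "0 \<le> k * (A - B)" using assms by simp
  then have "0 \<le> A - B" using assms(1) by (simp add: zero_le_mult_iff)
  then show ?thesis by simp
qed

lemma poly_h:
  assumes "0 \<le> y" "y \<le> (1::real)"
  shows "16181/10000 + y \<le> (31/100 - 69/500*y)*(2618/1000 + y)*(2+y)*(1 + 41/100*y)"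
proof -
  have id: "25000000 * ((31/100 - 69/500*y)*(2618/1000 + y)*(2+y)*(1 + 41/100*y) - (16181/10000 + y))
    = 126500*(1-y)^4 + 9868690*y*(1-y)^3 + 27932343*y^2*(1-y)^2 + 19959955*y^3*(1-y) + 355302*y^4"
    by (simp add: field_simps, algebra)
  have "0 \<le> 126500*(1-y)^4 + 9868690*y*(1-y)^3 + 27932343*y^2*(1-y)^2 + 19959955*y^3*(1-y) + 355302*y^4"
    using assms by (intro add_nonneg_nonneg mult_nonneg_nonneg) auto
  then show ?thesis using cert_le[OF _ id] by simp
qed

lemma T2:
  assumes y: "0 \<le> y" "y \<le> 1"
  shows "Rr 2 y / ((2+y) * sqrt (1+y)) \<le> (541/500)*(31/100 - 69/500*y) / eta y"
proof -
  define ex where "ex = eta (1/(2+y))"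
  define ey where "ey = eta y"
  have R: "Rr 2 y = ex * (1 + gg + y) / ((2 + y + gg) * ey)"
    using Rr_eq[of 2 y] y unfolding ex_def ey_def by simp
  have ey1: "1 \<le> ey" unfolding ey_def by (rule eta_ge1)
  have ex0: "0 \<le> ex" "ex \<le> 10812/10000" using eta_x2_le[OF y] eta_ge1[of "1/(2+y)"] unfolding ex_def by auto
  have sq: "1 + 41/100*y \<le> sqrt (1+y)"
  proof (rule real_le_rsqrt)
    have "y*y \<le> y*1" using mult_left_mono[OF y(2) y(1)] .
    then show "(1 + 41/100*y)^2 \<le> 1 + y" using y by (simp add: power2_eq_square algebra_simps)
  qed
  have "ex * (1 + gg + y) \<le> 10812/10000 * (16181/10000 + y)"
    using ex0 gg_hi gg_pos y by (intro mult_mono) auto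
  then have "Rr 2 y \<le> 10812/10000 * (16181/10000 + y) / ((2618/1000 + y) * ey)"
    unfolding R using ey1 gg_lo y
    by (intro frac_le mult_right_mono mult_pos_pos) auto
  then have "Rr 2 y / ((2+y) * sqrt (1+y)) \<le> (10812/10000 * (16181/10000 + y) / ((2618/1000 + y) * ey)) / ((2+y) * (1 + 41/100*y))"
    using y sq R ex0 ey1 gg_pos
    by (intro frac_le mult_left_mono) (auto intro!: divide_nonneg_pos mult_nonneg_nonneg)
  also have "\<dots> = 10812/10000 * ((16181/10000 + y) / ((2618/1000 + y)*(2+y)*(1 + 41/100*y))) / ey"
    using ey1 y by (simp add: field_simps)
  also have "\<dots> \<le> 10812/10000 * (31/100 - 69/500*y) / ey"
  proof -
    have "(16181/10000 + y) / ((2618/1000 + y)*(2+y)*(1 + 41/100*y)) \<le> 31/100 - 69/500*y"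
    proof -
      have D: "0 < (2618/1000 + y)*(2+y)*(1 + 41/100*y)" using y by (intro mult_pos_pos) auto
      have e: "(31/100 - 69/500*y) * ((2618/1000 + y)*(2+y)*(1 + 41/100*y)) = (31/100 - 69/500*y)*(2618/1000 + y)*(2+y)*(1 + 41/100*y)"
        by (simp only: mult.assoc)
      show ?thesis unfolding pos_divide_le_eq[OF D] e using poly_h[OF y] .
    qed
    then show ?thesis using ey1 by (intro divide_right_mono mult_left_mono) auto
  qed
  also have "\<dots> \<le> (541/500)*(31/100 - 69/500*y) / ey"
    using ey1 y by (intro divide_right_mono mult_right_mono) auto
  finally show ?thesis unfolding ey_def .
qed

lemma lin_aux: "B + 1809/250*(n-3) + 3272481/250000 \<le> X \<Longrightarrow> 0 \<le> B \<Longrightarrow> Z = 2401/15625*X \<Longrightarrow> 3 \<le> n \<Longrightarrow> n - 1 \<le> (Z::real)"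
  unfolding right_diff_distrib by linarith

lemma inv_le_div: assumes "0<a" "0<b" "b \<le> c*a" shows "1/a \<le> c/(b::real)"
proof -
  have "b/a \<le> c" using assms by (simp add: pos_divide_le_eq)
  then have "1/a*b \<le> c" by simp
  then show ?thesis using assms by (simp add: pos_le_divide_eq)
qed

lemma T3_aux:
  assumes n: "3 \<le> (n::real)"
  shows "1 / ((n + gg) * n * sqrt (n - 1)) \<le> (49/125) / (n * (n - 1))"
proof -
  define r where "r = sqrt (n - 1)"
  have r0: "0 < r" unfolding r_def using n by simp
  have r2: "r * r = n - 1" unfolding r_def using n by simp
  have sq: "(n + 309/500)^2 = (n-3)^2 + 1809/250*(n-3) + 3272481/250000"
    by (simp add: power2_eq_square field_simps)
  have "(n + 309/500)^2 \<le> (n + gg)^2" using n gg_lo by (intro power_mono) auto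
  moreover have "0 \<le> (n-3)^2" by simp
  ultimately have "(n-3)^2 + 1809/250*(n-3) + 3272481/250000 \<le> (n + gg)^2" "0 \<le> (n-3)^2"
    using sq by auto
  moreover have "(49/125 * (n + gg))^2 = (2401/15625)*(n+gg)^2" unfolding power_mult_distrib by (simp add: power2_eq_square)
  ultimately have "n - 1 \<le> (49/125 * (n + gg))^2"
    using lin_aux n by blast
  then have "r \<le> 49/125 * (n + gg)" unfolding r_def using n gg_pos by (intro real_le_lsqrt) auto
  then have "r * r \<le> 49/125 * (n + gg) * r" using r0 by (intro mult_right_mono) auto
  then have h1: "n - 1 \<le> 49/125 * (n + gg) * r" using r2 by simp
  have "n * (n - 1) \<le> n * (49/125 * (n + gg) * r)" using h1 n by (intro mult_left_mono) auto
  then have h2: "n * (n - 1) \<le> 49/125 * ((n + gg) * n * r)" by (simp add: algebra_simps)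
  have "1 / ((n + gg) * n * r) \<le> (49/125) / (n * (n - 1))"
    using n r0 gg_pos h2 by (intro inv_le_div) auto
  then show ?thesis unfolding r_def .
qed

lemma T3:
  assumes n: "3 \<le> n" and y: "0 \<le> y" "y \<le> 1"
  shows "Rr n y / ((n+y) * sqrt (n+y-1)) \<le> (13821/10000*(16181/10000+y)/eta y) * ((49/125) / (n*(n-1)))"
proof -
  define ex where "ex = eta (1/(n+y))"
  define ey where "ey = eta y"
  define A where "A = 13821/10000*(16181/10000+y)/ey"
  have R: "Rr n y = ex * (1 + gg + y) / ((n + y + gg) * ey)"
    using Rr_eq[of n y] n y unfolding ex_def ey_def by simp
  have ey1: "1 \<le> ey" unfolding ey_def by (rule eta_ge1)
  have ex0: "0 \<le> ex" "ex \<le> 13821/10000" using eta_xn_le[OF n y(1)] eta_ge1[of "1/(n+y)"] unfolding ex_def by auto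
  have A0: "0 \<le> A" unfolding A_def using y ey1 by simp
  have R0: "0 \<le> Rr n y" unfolding R using ex0 ey1 y gg_pos n by simp
  have "ex * (1 + gg + y) \<le> 13821/10000 * (16181/10000 + y)"
    using ex0 gg_hi gg_pos y by (intro mult_mono) auto
  then have "Rr n y \<le> 13821/10000 * (16181/10000 + y) / ((n + gg) * ey)"
    unfolding R using ey1 gg_pos y n
    by (intro frac_le mult_right_mono mult_pos_pos) auto
  also have "\<dots> = A / (n + gg)" unfolding A_def using ey1 gg_pos n by (simp add: field_simps)
  finally have Rle: "Rr n y \<le> A / (n + gg)" .
  have s1: "sqrt (n - 1) \<le> sqrt (n + y - 1)" using y by simp
  have d1: "0 < n * sqrt (n - 1)" using n by simp
  have d2: "n * sqrt (n - 1) \<le> (n+y) * sqrt (n+y-1)" using s1 n y by (intro mult_mono) auto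
  have "Rr n y / ((n+y) * sqrt (n+y-1)) \<le> (A / (n + gg)) / (n * sqrt (n - 1))"
    using Rle R0 d1 d2 A0 gg_pos n by (intro frac_le) auto
  also have "\<dots> = A * (1 / ((n + gg) * n * sqrt (n - 1)))" by (simp add: field_simps)
  also have "\<dots> \<le> A * ((49/125) / (n*(n-1)))" using T3_aux[OF n] A0 by (rule mult_left_mono)
  finally show ?thesis unfolding A_def ey_def .
qed

definition LL :: "real \<Rightarrow> real" where
  "LL y = 541/500*(31/100 - 69/500*y) + 691/2500*(16181/10000 + y)"

definition Qf :: "real \<Rightarrow> real \<Rightarrow> real \<Rightarrow> real" where
  "Qf y s t = (1+y)*(1+t)*(1+y/2+3*y^2/8) - 1 - 191/500*t*(1-3*y/4) - s*(1+y)*LL y"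

lemma Qpos:
  assumes w: "0 \<le> w" "w \<le> (1::real)"
  shows "0 \<le> Qf (w^2) w ((w^2 - 309/500)^2 - 1/5000)"
proof -
  have id: "500000000 * (Qf (w^2) w ((w^2 - 309/500)^2 - 1/5000) - 0)
   = 117952716*(1-w)^10 + 788195740*w*(1-w)^9 + 2494940403*w^2*(1-w)^8 + 5283929084*w^3*(1-w)^7
     + 8376991354*w^4*(1-w)^6 + 9363979120*w^5*(1-w)^5 + 6610881150*w^6*(1-w)^4
     + 3068588868*w^7*(1-w)^3 + 1902504494*w^8*(1-w)^2 + 1542604644*w^9*(1-w) + 731527339*w^10"
    unfolding Qf_def LL_def by (simp add: field_simps, algebra)
  have "0 \<le> 117952716*(1-w)^10 + 788195740*w*(1-w)^9 + 2494940403*w^2*(1-w)^8 + 5283929084*w^3*(1-w)^7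
     + 8376991354*w^4*(1-w)^6 + 9363979120*w^5*(1-w)^5 + 6610881150*w^6*(1-w)^4
     + 3068588868*w^7*(1-w)^3 + 1902504494*w^8*(1-w)^2 + 1542604644*w^9*(1-w) + 731527339*w^10"
    using w by (intro add_nonneg_nonneg mult_nonneg_nonneg) auto
  then show ?thesis using cert_le[OF _ id] by simp
qed

lemma Qmono:
  assumes y: "0 \<le> y" "y \<le> 1" and t: "t0 \<le> t"
  shows "Qf y s t0 \<le> Qf y s t"
proof -
  define K where "K = (1+y)*(1+y/2+3*y^2/8) - 191/500*(1-3*y/4)"
  have gen: "\<And>a b c d e t t0::real. (a*(1+t)*b - 1 - c*t*d - e) - (a*(1+t0)*b - 1 - c*t0*d - e) = (t - t0)*(a*b - c*d)"
    by (simp add: algebra_simps)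
  have D: "Qf y s t - Qf y s t0 = (t - t0) * K"
    unfolding Qf_def K_def by (rule gen)
  have "0 \<le> K"
  proof -
    have "1 \<le> (1+y)*(1+y/2+3*y^2/8)" using y by (simp add: algebra_simps)
    moreover have "191/500*(1-3*y/4) \<le> 1" using y by simp
    ultimately show ?thesis unfolding K_def by linarith
  qed
  then have "0 \<le> (t - t0) * K" using t by simp
  then show ?thesis using D by linarith
qed

lemma t0_le:
  assumes y: "0 \<le> y" "y \<le> 1"
  shows "(y - 309/500)^2 - 1/5000 \<le> (y - gg)^2"
proof -
  have e: "(y - gg)^2 - (y - 309/500)^2 = (gg - 309/500) * (gg + 309/500 - 2*y)"
    by (simp add: power2_eq_square algebra_simps)
  have a: "0 \<le> gg - 309/500" "gg - 309/500 \<le> 1/10000" using gg_lo gg_hi by auto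
  have b: "-2 \<le> gg + 309/500 - 2*y" using y gg_pos by simp
  define d where "d = gg - 309/500"
  define f where "f = gg + 309/500 - 2*y"
  have "d * (-2) \<le> d * f"
    using a b unfolding d_def f_def by (intro mult_left_mono) auto
  moreover have "d * (-2) = -2 * d" by simp
  ultimately have "-(1/5000) \<le> d * f" using a unfolding d_def[symmetric] by linarith
  then show ?thesis using e unfolding d_def f_def by linarith
qed

lemma FIN:
  assumes y: "0 < y" "y < 1"
  shows "Rr 1 y / ((1+y) * sqrt y) + (541/500)*(31/100 - 69/500*y) / eta y
          + (13821/10000*(16181/10000+y)/eta y) * (49/250) \<le> 1 / (sqrt y * sqrt (1-y))"
proof -
  define w where "w = sqrt y"
  define c where "c = sqrt (1-y)"
  define t where "t = (y - gg)^2"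
  define ex where "ex = eta (1/(1+y))"
  define P where "P = 1 + y/2 + 3*y^2/8"
  have w0: "0 < w" and w2: "w^2 = y" and w1: "w \<le> 1" using y unfolding w_def by auto
  have c0: "0 < c" and c2: "c^2 = 1 - y" using y unfolding c_def by auto
  have t0: "0 \<le> t" unfolding t_def by simp
  have ey: "eta y = 1 + t" unfolding eta_def t_def by simp
  have R1: "Rr 1 y = ex / (1 + t)"
  proof -
    have "Rr 1 y = ex * (1 + gg + y) / ((1 + y + gg) * eta y)"
      using Rr_eq[of 1 y] y unfolding ex_def by simp
    also have "\<dots> = (1 + gg + y) * ex / ((1 + gg + y) * (1 + t))" by (simp add: ey ac_simps)
    also have "\<dots> = ex / (1 + t)" using y gg_pos by simp
    finally show ?thesis .
  qed
  have exb: "ex \<le> 1 + 191/500 * t * (1 - 3*y/4)"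
  proof -
    have e: "ex = 1 + gg*gg*t/(1+y)^2" unfolding ex_def t_def using eta_x1[of y] y by simp
    have g2: "gg*gg \<le> 191/500" using gg_sq gg_lo by simp
    have i2: "1/(1+y)^2 \<le> 1 - 3*y/4"
    proof -
      have "1 \<le> (1 - 3*y/4) * (1+y)^2"
      proof -
        have "(1 - 3*y/4) * (1+y)^2 - 1 = y * (5/4 - y/2 - 3*y^2/4)"
          by (simp add: power2_eq_square field_simps)
        moreover have "0 \<le> y * (5/4 - y/2 - 3*y^2/4)"
        proof -
          have "y^2 \<le> 1" using y by (simp add: power_le_one)
          then have "0 \<le> 5/4 - y/2 - 3*y^2/4" using y by simp
          then show ?thesis using y by simp
        qed
        ultimately show ?thesis by linarith
      qed
      then show ?thesis using y by (simp add: field_simps)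
    qed
    have "gg*gg*t/(1+y)^2 = (gg*gg) * (t * (1/(1+y)^2))" by simp
    also have "\<dots> \<le> 191/500 * (t * (1 - 3*y/4))"
      using g2 i2 t0 by (intro mult_mono) (auto simp: gg_pos)
    finally show ?thesis unfolding e by simp
  qed
  have Q: "0 \<le> Qf y w t"
  proof -
    have "0 \<le> Qf (w^2) w ((w^2 - 309/500)^2 - 1/5000)" using Qpos[of w] w0 w1 by simp
    also have "\<dots> \<le> Qf y w t" unfolding w2 t_def using t0_le[of y] Qmono[of y] y by simp
    finally show ?thesis .
  qed
  have Pc: "P * c \<le> 1"
  proof -
    have "(P*c)^2 = P^2 * (1-y)" using c2 by (simp add: power_mult_distrib)
    also have "\<dots> = 1 - (5/8*y^3 + 15/64*y^4 + 9/64*y^5)" unfolding P_def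
      by (simp add: power2_eq_square field_simps, algebra)
    also have "\<dots> \<le> 1"
    proof -
      have "0 \<le> y^3" "0 \<le> y^4" "0 \<le> y^5" using y by simp_all
      then show ?thesis by linarith
    qed
    finally have "(P*c)^2 \<le> 1" .
    moreover have "0 \<le> P*c" unfolding P_def using y c0 by simp
    ultimately show ?thesis using power2_le_imp_le[of "P*c" 1] by simp
  qed
  define M where "M = (541/500)*(31/100 - 69/500*y) + (13821/10000*(16181/10000+y))*(49/250)"
  have hML: "M \<le> LL y" unfolding M_def LL_def using y by simp
  have M0: "0 \<le> M" unfolding M_def using y by simp
  have LHS: "Rr 1 y / ((1+y) * sqrt y) + (541/500)*(31/100 - 69/500*y) / eta y
          + (13821/10000*(16181/10000+y)/eta y) * (49/250) = (ex/(1+y) + w*M) / (w*(1+t))"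
  proof -
    have nz: "1 + t \<noteq> 0" "1 + y \<noteq> 0" "w \<noteq> 0" using t0 y w0 by auto
    have a: "Rr 1 y / ((1+y) * sqrt y) = (ex/(1+y)) / (w*(1+t))"
      unfolding R1 w_def[symmetric] using nz by (simp add: field_simps)
    have b: "(541/500)*(31/100 - 69/500*y) / eta y + (13821/10000*(16181/10000+y)/eta y) * (49/250)
       = M / (1+t)"
      unfolding ey M_def by (simp add: add_divide_distrib)
    have b2: "M/(1+t) = (w*M)/(w*(1+t))" using nz by simp
    show ?thesis unfolding add.assoc a b b2 by (simp add: add_divide_distrib)
  qed
  have S2: "ex/(1+y) + w*M \<le> (1+t)*P"
  proof -
    have q: "ex + w*(1+y)*LL y \<le> (1+y)*(1+t)*P"
      using Q exb unfolding Qf_def P_def by linarith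
    have "w*(1+y)*M \<le> w*(1+y)*LL y" using hML w0 y by (intro mult_left_mono) auto
    then have "ex + w*(1+y)*M \<le> (1+y)*((1+t)*P)" using q by (simp add: algebra_simps)
    then have "(ex + w*(1+y)*M)/(1+y) \<le> (1+t)*P" using y by (simp add: pos_divide_le_eq mult.commute)
    moreover have "(ex + w*(1+y)*M)/(1+y) = ex/(1+y) + w*M" using y by (simp add: field_simps)
    ultimately show ?thesis by simp
  qed
  have "(ex/(1+y) + w*M) / (w*(1+t)) \<le> ((1+t)*P) / (w*(1+t))"
    using S2 w0 t0 by (intro divide_right_mono) auto
  also have "\<dots> = P / w" using t0 w0 by simp
  also have "\<dots> \<le> 1 / (w * c)"
  proof -
    have "P \<le> 1 / c" using Pc c0 by (simp add: pos_le_divide_eq)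
    then have "P / w \<le> (1/c) / w" using w0 by (intro divide_right_mono) auto
    then show ?thesis by (simp add: mult.commute)
  qed
  finally show ?thesis unfolding LHS w_def c_def .
qed

definition ff :: "real \<Rightarrow> nat \<Rightarrow> real" where
  "ff y m = Rr (real (Suc m)) y / ((real (Suc m) + y) * sqrt (real (Suc m) + y - 1))"

lemma tele_half: "(\<lambda>n. 1/(real n + 2) - 1/(real (Suc n) + 2)) sums (1/2)"
proof -
  have "(\<lambda>n. 1 / real (n + 2)) \<longlonglongrightarrow> 0"
    using LIMSEQ_ignore_initial_segment[OF lim_1_over_n, of 2] by simp
  then have "(\<lambda>n. 1/(real n + 2)) \<longlonglongrightarrow> 0" by (simp add: add.commute)
  from telescope_sums'[OF this] show ?thesis by simp
qed

lemma ff_nonneg: assumes "0 < y" "y < 1" shows "0 \<le> ff y m"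
proof -
  have "0 \<le> Rr (real (Suc m)) y" using Rr_le1[of "Suc m" y] assms by simp
  then show ?thesis unfolding ff_def using assms by simp
qed

lemma PWsum:
  assumes y: "0 < y" "y < 1"
  shows "summable (ff y) \<and> suminf (ff y) \<le> 1 / (sqrt y * sqrt (1-y))"
proof -
  define A where "A = 13821/10000*(16181/10000+y)/eta y"
  define B where "B = A * (49/125)"
  have A0: "0 \<le> A" unfolding A_def using y eta_ge1[of y] by simp
  have tl: "ff y (m + 2) \<le> B * (1/(real m + 2) - 1/(real (Suc m) + 2))" for m
  proof -
    have n3: "3 \<le> real (Suc (m+2))" by simp
    have "ff y (m+2) \<le> A * ((49/125) / (real (Suc (m+2)) * (real (Suc (m+2)) - 1)))"
      unfolding ff_def A_def using T3[OF n3, of y] y by simp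
    also have "\<dots> = B * (1/(real m + 2) - 1/(real (Suc m) + 2))"
      unfolding B_def by (simp add: field_simps)
    finally show ?thesis .
  qed
  have sB: "(\<lambda>m. B * (1/(real m + 2) - 1/(real (Suc m) + 2))) sums (B * (1/2))"
    by (rule sums_mult[OF tele_half])
  have sum2: "summable (\<lambda>m. ff y (m + 2))"
    by (rule summable_comparison_test[OF _ sums_summable[OF sB]])
       (use tl ff_nonneg[OF y] in auto)
  then have sf: "summable (ff y)" by (rule iffD1[OF summable_iff_shift])
  have "(\<Sum>m. ff y (m + 2)) \<le> B * (1/2)"
    using suminf_le[OF tl sum2 sums_summable[OF sB]] sums_unique[OF sB] by simp
  moreover have "suminf (ff y) = (\<Sum>m. ff y (m + 2)) + (ff y 0 + ff y 1)"
    using suminf_split_initial_segment[OF sf, of 2] by (simp add: numeral_2_eq_2)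
  moreover have "ff y 0 = Rr 1 y / ((1+y) * sqrt y)" unfolding ff_def by simp
  moreover have "ff y 1 \<le> (541/500)*(31/100 - 69/500*y) / eta y"
    unfolding ff_def using T2[of y] y by (simp add: add.commute)
  moreover have "B * (1/2) = A * (49/250)" unfolding B_def by simp
  ultimately have "suminf (ff y) \<le> Rr 1 y / ((1+y) * sqrt y) + (541/500)*(31/100 - 69/500*y) / eta y
          + A * (49/250)" by linarith
  also have "\<dots> \<le> 1 / (sqrt y * sqrt (1-y))" using FIN[OF y] unfolding A_def .
  finally show ?thesis using sf by simp
qed

definition rho :: "real \<Rightarrow> real" where
  "rho x = indicator {0..1} x / (2 * sqrt (x * (1 - x)))"

definition psi :: "real \<Rightarrow> real \<Rightarrow> real" where
  "psi p x = chi x powr p"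

lemma psi_bounds: "0 \<le> p \<Longrightarrow> (1/3) powr p \<le> psi p x \<and> psi p x \<le> 1"
  unfolding psi_def using chi_bounds[of x] by (auto intro: powr_mono2 powr_le1)

lemma psi_pos: "0 < psi p x" unfolding psi_def using chi_pos[of x] by simp

lemma psi_ne0[simp]: "psi p x \<noteq> 0" using psi_pos[of p x] by simp

lemma rho_nonneg: "0 \<le> rho x"
proof (cases "x \<in> {0..1}")
  case True
  then have "0 \<le> x * (1 - x)" by simp
  then show ?thesis unfolding rho_def using True by simp
next
  case False
  then show ?thesis unfolding rho_def by simp
qed

definition cterm :: "real \<Rightarrow> real \<Rightarrow> nat \<Rightarrow> real" where
  "cterm p y m = rho (1/(real (Suc m) + y)) * (psi p (1/(real (Suc m) + y)) * (1/(real (Suc m) + y)) powr p)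
     * (1 / (real (Suc m) + y)^2)"

lemma cterm_le:
  assumes y: "0 < y" "y < 1" and p: "1 \<le> p"
  shows "cterm p y m \<le> (gg powr p * psi p y / 2) * ff y m"
proof -
  define n where "n = real (Suc m)"
  define x where "x = 1/(n+y)"
  have n1: "1 \<le> n" unfolding n_def by simp
  have ny: "1 < n + y" using n1 y by simp
  have x0: "0 < x" "x < 1" unfolding x_def using ny by auto
  have xx: "x * (1 - x) = (n + y - 1) / (n+y)^2" unfolding x_def using ny
    by (simp add: field_simps power2_eq_square)
  have sq: "sqrt (x * (1 - x)) = sqrt (n + y - 1) / (n+y)"
    unfolding xx real_sqrt_divide using ny by simp
  have rx: "rho x * (1/(n+y)^2) = 1 / (2 * ((n+y) * sqrt (n+y-1)))"
  proof -
    have sp: "0 < sqrt (n+y-1)" using ny by simp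
    have "rho x = (n+y) / (2 * sqrt (n+y-1))" unfolding rho_def sq using x0 ny sp by (simp add: indicator_def)
    then show ?thesis using ny sp by (simp add: power2_eq_square)
  qed
  have R: "x * chi x = (gg * chi y) * Rr n y"
    unfolding Rr_def x_def using gg_pos chi_pos[of y] by simp
  have Rb: "0 \<le> Rr n y" "Rr n y \<le> 1" using Rr_le1[of "Suc m" y] y unfolding n_def by auto
  have "psi p x * x powr p = (x * chi x) powr p"
    unfolding psi_def using x0 chi_pos[of x] by (simp add: powr_mult mult.commute)
  also have "\<dots> = (gg * chi y) powr p * Rr n y powr p"
    unfolding R using gg_pos chi_pos[of y] Rb by (simp add: powr_mult)
  also have "\<dots> \<le> (gg * chi y) powr p * Rr n y"
  proof -
    have "Rr n y powr p \<le> Rr n y"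
      using Rb p by (cases "Rr n y = 0") (auto intro: powr_le_one_le)
    then show ?thesis by (intro mult_left_mono) auto
  qed
  also have "\<dots> = gg powr p * psi p y * Rr n y"
    unfolding psi_def using gg_pos chi_pos[of y] by (simp add: powr_mult)
  finally have a: "psi p x * x powr p \<le> gg powr p * psi p y * Rr n y" .
  have "cterm p y m = (rho x * (1/(n+y)^2)) * (psi p x * x powr p)"
    unfolding cterm_def n_def[symmetric] x_def[symmetric] by (simp add: ac_simps)
  also have "\<dots> \<le> (rho x * (1/(n+y)^2)) * (gg powr p * psi p y * Rr n y)"
    using a rho_nonneg[of x] ny by (intro mult_left_mono) auto
  also have "\<dots> = (gg powr p * psi p y / 2) * ff y m"
    unfolding rx ff_def n_def[symmetric] by (simp add: field_simps)
  finally show ?thesis .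
qed

lemma cterm_nonneg: "0 \<le> y \<Longrightarrow> 0 \<le> cterm p y m"
  unfolding cterm_def using rho_nonneg psi_pos by (intro mult_nonneg_nonneg) (auto intro: less_imp_le)

lemma PW_enn:
  assumes y: "0 < y" "y < 1" and p: "1 \<le> p"
  shows "(\<Sum>m. ennreal (cterm p y m)) \<le> ennreal (gg powr p * psi p y * rho y)"
proof -
  define K where "K = gg powr p * psi p y / 2"
  have K0: "0 \<le> K" unfolding K_def using psi_pos[of p y] by simp
  have S: "summable (ff y)" "suminf (ff y) \<le> 1 / (sqrt y * sqrt (1-y))" using PWsum[OF y] by auto
  have "(\<Sum>m. ennreal (cterm p y m)) \<le> (\<Sum>m. ennreal (K * ff y m))"
    using cterm_le[OF y p] unfolding K_def by (intro suminf_le ennreal_leI) auto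
  also have "\<dots> = ennreal (\<Sum>m. K * ff y m)"
    using S K0 ff_nonneg[OF y] by (intro suminf_ennreal2) (auto intro: summable_mult)
  also have "\<dots> = ennreal (K * suminf (ff y))" using S by (simp add: suminf_mult)
  also have "\<dots> \<le> ennreal (K * (1 / (sqrt y * sqrt (1-y))))"
    using S K0 by (intro ennreal_leI mult_left_mono) auto
  also have "K * (1 / (sqrt y * sqrt (1-y))) = gg powr p * psi p y * rho y"
    unfolding K_def rho_def using y by (simp add: real_sqrt_mult indicator_def)
  finally show ?thesis .
qed

lemma mu_eq: "mu = density lborel (\<lambda>x. ennreal (rho x))"
  unfolding mu_def rho_def by simp

lemma sets_mu[measurable_cong]: "sets mu = sets borel"
  unfolding mu_eq by simp

lemma space_mu[simp]: "space mu = UNIV"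
  unfolding mu_eq by simp

lemma measurable_mu_iff:
  fixes f :: "real \<Rightarrow> 'a::topological_space"
  shows "f \<in> borel_measurable mu \<longleftrightarrow> f \<in> borel_measurable borel"
proof -
  have "measurable mu (borel :: 'a measure) = measurable borel borel"
    by (rule measurable_cong_sets) (simp_all add: sets_mu)
  then show ?thesis by simp
qed

lemma rho_meas[measurable]: "rho \<in> borel_measurable borel"
  unfolding rho_def by measurable

lemma chi_meas[measurable]: "chi \<in> borel_measurable borel"
  unfolding chi_def eta_def by measurable

lemma psi_meas[measurable]: "psi p \<in> borel_measurable borel"
  unfolding psi_def by measurable

lemma frac_meas[measurable]: "(frac :: real \<Rightarrow> real) \<in> borel_measurable borel"
  unfolding frac_def[abs_def] by measurable

lemma branch:
  fixes H :: "real \<Rightarrow> ennreal" and n :: real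
  assumes H[measurable]: "H \<in> borel_measurable borel" and n: "1 \<le> n"
  shows "(\<integral>\<^sup>+x. H x * indicator {1/(n+1)..1/n} x \<partial>lborel)
       = (\<integral>\<^sup>+y. H (1/(n+y)) * ennreal (1/(n+y)^2) * indicator {0..1} y \<partial>lborel)"
proof -
  define g where "g y = 1/(n+1-y)" for y
  define g' where "g' y = 1/(n+1-y)^2" for y
  have ga: "g 0 = 1/(n+1)" "g 1 = 1/n" unfolding g_def by simp_all
  have dg: "(g has_real_derivative g' y) (at y)" if "y \<in> {0..1}" for y
  proof -
    have "n + 1 - y \<noteq> 0" using that n by auto
    then show ?thesis unfolding g_def g'_def
      by (auto intro!: derivative_eq_intros simp: power2_eq_square field_simps)
  qed
  have cg: "continuous_on {0..1} g'"
    unfolding g'_def using n by (intro continuous_intros) auto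
  have "(\<integral>\<^sup>+x. H x * indicator {1/(n+1)..1/n} x \<partial>lborel)
     = (\<integral>\<^sup>+x. H x * indicator {g 0..g 1} x \<partial>lborel)" unfolding ga ..
  also have "\<dots> = (\<integral>\<^sup>+y. H (g y) * ennreal (g' y) * indicator {0..1} y \<partial>lborel)"
    by (rule nn_integral_substitution_aux[OF H _ dg cg]) (auto simp: g'_def)
  also have "\<dots> = (\<integral>\<^sup>+y. H (g (1 + (-1) * y)) * ennreal (g' (1 + (-1) * y)) * indicator {0..1} (1 + (-1) * y) \<partial>lborel)"
    using nn_integral_real_affine[where c="-1" and t=1 and f="\<lambda>y. H (g y) * ennreal (g' y) * indicator {0..1} y"]
    unfolding g_def g'_def by simp
  also have "\<dots> = (\<integral>\<^sup>+y. H (1/(n+y)) * ennreal (1/(n+y)^2) * indicator {0..1} y \<partial>lborel)"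
    by (intro nn_integral_cong) (auto simp: g_def g'_def indicator_def)
  finally show ?thesis .
qed

lemma enn_le_suminf: "(f :: nat \<Rightarrow> ennreal) m \<le> suminf f"
  using sum_le_suminf[OF summableI, of "{m}" f] by simp

lemma ptw_branch:
  fixes F :: "real \<Rightarrow> ennreal"
  assumes x: "x \<notin> range (\<lambda>k::nat. 1 / real k)"
  shows "ennreal (rho x) * (ennreal (psi p x * x powr p) * F (frac (1/x)) * indicator {0<..1} x)
    \<le> (\<Sum>m. ennreal (rho x * (psi p x * x powr p)) * F (1/x - real (Suc m))
            * indicator {1/(real (Suc m)+1)..1/real (Suc m)} x)"
proof (cases "x \<in> {0<..1}")
  case False
  then show ?thesis by simp
next
  case True
  then have x0: "0 < x" "x \<le> 1" by auto
  define N where "N = nat \<lfloor>1/x\<rfloor>"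
  have ix: "1 \<le> 1/x" using x0 by (simp add: field_simps)
  have f0: "1 \<le> \<lfloor>1/x\<rfloor>" using ix by (simp add: le_floor_iff)
  have f00: "0 \<le> \<lfloor>1/x\<rfloor>" using f0 by linarith
  have fl: "real N = of_int \<lfloor>1/x\<rfloor>" unfolding N_def by (rule of_nat_nat[OF f00])
  have N1: "1 \<le> N" unfolding N_def using ix by linarith
  have Nle: "real N \<le> 1/x" unfolding fl by simp
  have Nlt: "1/x < real N + 1" unfolding fl by linarith
  have Nne: "real N \<noteq> 1/x"
  proof
    assume "real N = 1/x"
    then have "x = 1 / real N" using x0 N1 by (simp add: field_simps)
    then show False using x by auto
  qed
  have Nlt': "real N < 1/x" using Nle Nne by simp
  have frac: "frac (1/x) = 1/x - real N"
    unfolding frac_def using fl by simp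
  have xin: "x \<in> {1/(real N + 1)..1/real N}"
    using Nlt Nle N1 x0 by (auto simp: field_simps)
  obtain m where m: "N = Suc m" using N1 by (cases N) auto
  have "ennreal (rho x) * (ennreal (psi p x * x powr p) * F (frac (1/x)) * indicator {0<..1} x)
      = ennreal (rho x * (psi p x * x powr p)) * F (1/x - real (Suc m))
            * indicator {1/(real (Suc m)+1)..1/real (Suc m)} x"
    using True xin m frac rho_nonneg[of x] by (simp add: ennreal_mult' mult.assoc)
  also have "\<dots> \<le> (\<Sum>m. ennreal (rho x * (psi p x * x powr p)) * F (1/x - real (Suc m))
            * indicator {1/(real (Suc m)+1)..1/real (Suc m)} x)"
    by (rule enn_le_suminf)
  finally show ?thesis .
qed

lemma KEY:
  fixes F :: "real \<Rightarrow> ennreal"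
  assumes F[measurable]: "F \<in> borel_measurable borel" and p: "1 \<le> p"
  shows "(\<integral>\<^sup>+x. ennreal (psi p x * x powr p) * F (frac (1/x)) * indicator {0<..1} x \<partial>mu)
     \<le> ennreal (gg powr p) * (\<integral>\<^sup>+x. ennreal (psi p x) * F x \<partial>mu)"
proof -
  define G where "G m x = ennreal (rho x * (psi p x * x powr p)) * F (1/x - real (Suc m))
            * indicator {1/(real (Suc m)+1)..1/real (Suc m)} x" for m x
  have Gm[measurable]: "G m \<in> borel_measurable borel" for m unfolding G_def by measurable
  have "(\<integral>\<^sup>+x. ennreal (psi p x * x powr p) * F (frac (1/x)) * indicator {0<..1} x \<partial>mu)
     = (\<integral>\<^sup>+x. ennreal (rho x) * (ennreal (psi p x * x powr p) * F (frac (1/x)) * indicator {0<..1} x) \<partial>lborel)"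
    unfolding mu_eq by (subst nn_integral_density) auto
  also have "\<dots> \<le> (\<integral>\<^sup>+x. (\<Sum>m. G m x) \<partial>lborel)"
  proof (rule nn_integral_mono_AE)
    have N: "range (\<lambda>k::nat. 1 / real k) \<in> null_sets lborel"
      by (rule countable_imp_null_set_lborel) simp
    show "AE x in lborel. ennreal (rho x) * (ennreal (psi p x * x powr p) * F (frac (1/x)) * indicator {0<..1} x)
       \<le> (\<Sum>m. G m x)"
    proof (rule AE_I'[OF N], safe)
      fix x
      assume nle: "\<not> ennreal (rho x) * (ennreal (psi p x * x powr p) * F (frac (1/x)) * indicator {0<..1} x)
       \<le> (\<Sum>m. G m x)"
      show "x \<in> range (\<lambda>k::nat. 1 / real k)"
      proof (rule ccontr)
        assume "x \<notin> range (\<lambda>k::nat. 1 / real k)"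
        from ptw_branch[OF this, of p F] nle show False unfolding G_def by blast
      qed
    qed
  qed
  also have "\<dots> = (\<Sum>m. \<integral>\<^sup>+x. G m x \<partial>lborel)"
    by (rule nn_integral_suminf) simp
  also have "\<dots> = (\<Sum>m. \<integral>\<^sup>+y. ennreal (cterm p y m) * F y * indicator {0..1} y \<partial>lborel)"
  proof (rule suminf_cong)
    fix m
    define n where "n = real (Suc m)"
    define H where "H x = ennreal (rho x * (psi p x * x powr p)) * F (1/x - n)" for x
    have H[measurable]: "H \<in> borel_measurable borel" unfolding H_def by measurable
    have "(\<integral>\<^sup>+x. G m x \<partial>lborel) = (\<integral>\<^sup>+x. H x * indicator {1/(n+1)..1/n} x \<partial>lborel)"
      unfolding G_def H_def n_def by simp
    also have "\<dots> = (\<integral>\<^sup>+y. H (1/(n+y)) * ennreal (1/(n+y)^2) * indicator {0..1} y \<partial>lborel)"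
      by (rule branch[OF H]) (simp add: n_def)
    also have "\<dots> = (\<integral>\<^sup>+y. ennreal (cterm p y m) * F y * indicator {0..1} y \<partial>lborel)"
    proof (rule nn_integral_cong)
      fix y
      show "H (1/(n+y)) * ennreal (1/(n+y)^2) * indicator {0..1} y = ennreal (cterm p y m) * F y * indicator {0..1} y"
      proof (cases "y \<in> {0..1}")
        case True
        then have ny: "0 < n + y" unfolding n_def by auto
        have a: "1 / (1 / (n + y)) - n = y" using ny by simp
        have b: "0 \<le> rho (1/(n+y)) * (psi p (1/(n+y)) * (1/(n+y)) powr p)"
          using rho_nonneg psi_pos by (intro mult_nonneg_nonneg) (auto intro: less_imp_le)
        have c: "ennreal (cterm p y m) = ennreal (rho (1/(n+y)) * (psi p (1/(n+y)) * (1/(n+y)) powr p)) * ennreal (1/(n+y)^2)"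
          unfolding cterm_def n_def[symmetric] by (rule ennreal_mult[OF b]) simp
        show ?thesis unfolding H_def a c by (simp add: ac_simps)
      qed simp
    qed
    finally show "(\<integral>\<^sup>+x. G m x \<partial>lborel) = (\<integral>\<^sup>+y. ennreal (cterm p y m) * F y * indicator {0..1} y \<partial>lborel)" .
  qed
  also have "\<dots> = (\<integral>\<^sup>+y. (\<Sum>m. ennreal (cterm p y m)) * F y * indicator {0..1} y \<partial>lborel)"
  proof -
    have "(\<integral>\<^sup>+y. (\<Sum>m. ennreal (cterm p y m) * F y * indicator {0..1} y) \<partial>lborel)
        = (\<Sum>m. \<integral>\<^sup>+y. ennreal (cterm p y m) * F y * indicator {0..1} y \<partial>lborel)"
      by (rule nn_integral_suminf) (simp add: cterm_def)
    moreover have "(\<Sum>m. ennreal (cterm p y m) * F y * indicator {0..1} y) = (\<Sum>m. ennreal (cterm p y m)) * F y * indicator {0..1} y" for y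
      by simp
    ultimately show ?thesis by simp
  qed
  also have "\<dots> \<le> (\<integral>\<^sup>+y. ennreal (gg powr p * psi p y * rho y) * F y * indicator {0..1} y \<partial>lborel)"
  proof (rule nn_integral_mono_AE)
    have N: "{0, 1::real} \<in> null_sets lborel"
      by (rule countable_imp_null_set_lborel) simp
    have ae: "AE y in lborel. y \<notin> {0, 1::real}" by (rule AE_I'[OF N]) auto
    then show "AE y in lborel. (\<Sum>m. ennreal (cterm p y m)) * F y * indicator {0..1} y
        \<le> ennreal (gg powr p * psi p y * rho y) * F y * indicator {0..1} y"
    proof (rule AE_mp)
      show "AE y in lborel. y \<notin> {0, 1} \<longrightarrow> (\<Sum>m. ennreal (cterm p y m)) * F y * indicator {0..1} y
        \<le> ennreal (gg powr p * psi p y * rho y) * F y * indicator {0..1} y"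
      proof (intro AE_I2 impI)
        fix y :: real
        assume y01: "y \<notin> {0, 1}"
        show "(\<Sum>m. ennreal (cterm p y m)) * F y * indicator {0..1} y
        \<le> ennreal (gg powr p * psi p y * rho y) * F y * indicator {0..1} y"
        proof (cases "y \<in> {0..1}")
          case True
          with y01 have y: "0 < y" "y < 1" by auto
          show ?thesis by (intro mult_right_mono PW_enn[OF y p]) auto
        next
          case False
          then show ?thesis by simp
        qed
      qed
    qed
  qed
  also have "\<dots> = (\<integral>\<^sup>+y. ennreal (gg powr p) * (ennreal (rho y) * (ennreal (psi p y) * F y)) \<partial>lborel)"
  proof (rule nn_integral_cong)
    fix y
    have r: "rho y * indicator {0..1} y = rho y" unfolding rho_def by (simp add: indicator_def)
    have "ennreal (gg powr p * psi p y * rho y) * F y * indicator {0..1} y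
        = ennreal (gg powr p) * (ennreal (rho y * indicator {0..1} y) * (ennreal (psi p y) * F y))"
      using psi_pos[of p y] rho_nonneg[of y] gg_pos
      by (simp add: ennreal_mult ac_simps indicator_def)
    then show "ennreal (gg powr p * psi p y * rho y) * F y * indicator {0..1} y
        = ennreal (gg powr p) * (ennreal (rho y) * (ennreal (psi p y) * F y))" unfolding r .
  qed
  also have "\<dots> = ennreal (gg powr p) * (\<integral>\<^sup>+y. ennreal (rho y) * (ennreal (psi p y) * F y) \<partial>lborel)"
    by (rule nn_integral_cmult) simp
  also have "\<dots> = ennreal (gg powr p) * (\<integral>\<^sup>+x. ennreal (psi p x) * F x \<partial>mu)"
    unfolding mu_eq by (subst nn_integral_density) auto
  finally show ?thesis .
qed

definition Wn :: "real \<Rightarrow> (real \<Rightarrow> complex) \<Rightarrow> ennreal" where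
  "Wn p u = (\<integral>\<^sup>+x. ennreal (psi p x) * ennreal (cmod (u x) powr p) \<partial>mu)"

definition In :: "real \<Rightarrow> (real \<Rightarrow> complex) \<Rightarrow> ennreal" where
  "In p u = (\<integral>\<^sup>+x. ennreal (cmod (u x) powr p) \<partial>mu)"

lemma Top_meas[measurable]:
  assumes [measurable]: "u \<in> borel_measurable borel"
  shows "Top u \<in> borel_measurable borel"
  unfolding Top_def[abs_def] by measurable

lemma Top_powr:
  "ennreal (psi p x) * ennreal (cmod (Top u x) powr p)
     = ennreal (psi p x * x powr p) * ennreal (cmod (u (frac (1/x))) powr p) * indicator {0<..1} x"
proof (cases "0 < x \<and> x \<le> 1")
  case True
  have "cmod (Top u x) powr p = x powr p * cmod (u (frac (1/x))) powr p"
    using True unfolding Top_def by (simp add: norm_mult powr_mult)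
  then show ?thesis using True psi_pos[of p x]
    by (simp add: ennreal_mult ac_simps)
next
  case False
  then show ?thesis unfolding Top_def by (auto simp: indicator_def)
qed

lemma KEY':
  assumes [measurable]: "u \<in> borel_measurable borel" and p: "1 \<le> p"
  shows "Wn p (Top u) \<le> ennreal (gg powr p) * Wn p u"
proof -
  have "Wn p (Top u) = (\<integral>\<^sup>+x. ennreal (psi p x * x powr p) * (\<lambda>y. ennreal (cmod (u y) powr p)) (frac (1/x)) * indicator {0<..1} x \<partial>mu)"
    unfolding Wn_def Top_powr by simp
  also have "\<dots> \<le> ennreal (gg powr p) * (\<integral>\<^sup>+x. ennreal (psi p x) * (\<lambda>y. ennreal (cmod (u y) powr p)) x \<partial>mu)"
    by (rule KEY[OF _ p]) measurable
  also have "\<dots> = ennreal (gg powr p) * Wn p u" unfolding Wn_def by simp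
  finally show ?thesis .
qed

lemma Wn_le_In: "0 \<le> p \<Longrightarrow> Wn p u \<le> In p u"
  unfolding Wn_def In_def
proof (rule nn_integral_mono)
  fix x assume "0 \<le> p"
  then have "psi p x \<le> 1" using psi_bounds by blast
  then have "ennreal (psi p x) * ennreal (cmod (u x) powr p) \<le> 1 * ennreal (cmod (u x) powr p)"
    by (intro mult_right_mono) auto
  then show "ennreal (psi p x) * ennreal (cmod (u x) powr p) \<le> ennreal (cmod (u x) powr p)" by simp
qed

lemma In_le_Wn:
  assumes [measurable]: "u \<in> borel_measurable borel" and p: "0 \<le> p"
  shows "In p u \<le> ennreal (3 powr p) * Wn p u"
proof -
  have "In p u \<le> (\<integral>\<^sup>+x. ennreal (3 powr p) * (ennreal (psi p x) * ennreal (cmod (u x) powr p)) \<partial>mu)"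
    unfolding In_def
  proof (rule nn_integral_mono)
    fix x
    have "(1/3) powr p \<le> psi p x" using psi_bounds[OF p] by blast
    then have "3 powr p * (1/3) powr p \<le> 3 powr p * psi p x" by (intro mult_left_mono) auto
    moreover have "3 powr p * (1/3) powr p = 1" by (simp add: powr_divide)
    ultimately have "1 \<le> 3 powr p * psi p x" by simp
    then have "ennreal 1 * ennreal (cmod (u x) powr p) \<le> ennreal (3 powr p * psi p x) * ennreal (cmod (u x) powr p)"
      by (intro mult_right_mono ennreal_leI) auto
    then show "ennreal (cmod (u x) powr p) \<le> ennreal (3 powr p) * (ennreal (psi p x) * ennreal (cmod (u x) powr p))"
      using psi_pos[of p x] by (simp add: ennreal_mult mult.assoc)
  qed
  also have "\<dots> = ennreal (3 powr p) * Wn p u" unfolding Wn_def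
    by (rule nn_integral_cmult) (simp add: measurable_mu_iff)
  finally show ?thesis .
qed

lemma in_Lp_iff: "in_Lp p u \<longleftrightarrow> u \<in> borel_measurable borel \<and> In p u < \<infinity>"
  unfolding in_Lp_def In_def measurable_mu_iff ..

lemma Lp_norm_In: "Lp_norm p u = enn2real (In p u) powr (1/p)"
  unfolding Lp_norm_def In_def ..

lemma Top_bound:
  assumes p: "1 \<le> p" and [measurable]: "u \<in> borel_measurable borel"
  shows "In p (Top u) \<le> ennreal ((3*gg) powr p) * In p u"
proof -
  have "In p (Top u) \<le> ennreal (3 powr p) * Wn p (Top u)" using p by (intro In_le_Wn) auto
  also have "\<dots> \<le> ennreal (3 powr p) * (ennreal (gg powr p) * Wn p u)"
    using KEY'[OF _ p] by (intro mult_left_mono) auto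
  also have "\<dots> \<le> ennreal (3 powr p) * (ennreal (gg powr p) * In p u)"
    using Wn_le_In[of p u] p by (intro mult_left_mono) auto
  also have "\<dots> = ennreal ((3*gg) powr p) * In p u"
    using gg_pos by (simp add: powr_mult ennreal_mult mult.assoc)
  finally show ?thesis .
qed

lemma bounded_Top:
  assumes p: "1 \<le> p"
  shows "bounded_on_Lp p Top"
  unfolding bounded_on_Lp_def
proof (intro exI allI impI)
  fix u assume u: "in_Lp p u"
  then have um[measurable]: "u \<in> borel_measurable borel" and ui: "In p u < \<infinity>" by (auto simp: in_Lp_iff)
  have b: "In p (Top u) \<le> ennreal ((3*gg) powr p) * In p u" by (rule Top_bound[OF p um])
  have fin: "ennreal ((3*gg) powr p) * In p u < \<infinity>" using ui by (simp add: ennreal_mult_less_top)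
  have t: "In p (Top u) < \<infinity>" using b fin by (rule le_less_trans)
  show "in_Lp p (Top u) \<and> Lp_norm p (Top u) \<le> (3*gg) * Lp_norm p u"
  proof
    show "in_Lp p (Top u)" unfolding in_Lp_iff using t by simp
    have "enn2real (In p (Top u)) \<le> enn2real (ennreal ((3*gg) powr p) * In p u)"
      using b fin by (intro enn2real_mono) auto
    also have "\<dots> = (3*gg) powr p * enn2real (In p u)" by (simp add: enn2real_mult)
    finally have e: "enn2real (In p (Top u)) \<le> (3*gg) powr p * enn2real (In p u)" .
    have "Lp_norm p (Top u) \<le> ((3*gg) powr p * enn2real (In p u)) powr (1/p)"
      unfolding Lp_norm_In using e p by (intro powr_mono2) auto
    also have "\<dots> = ((3*gg) powr p) powr (1/p) * enn2real (In p u) powr (1/p)"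
      by (simp add: powr_mult)
    also have "((3*gg) powr p) powr (1/p) = 3*gg"
      using p gg_pos by (simp add: powr_powr)
    finally show "Lp_norm p (Top u) \<le> (3*gg) * Lp_norm p u" unfolding Lp_norm_In .
  qed
qed

lemma inj_part:
  assumes p: "1 \<le> p" and l: "gg < cmod l" and u: "in_Lp p u"
    and ae: "AE x in mu. Top u x - l * u x = 0"
  shows "AE x in mu. u x = 0"
proof -
  have um[measurable]: "u \<in> borel_measurable borel" and ui: "In p u < \<infinity>" using u by (auto simp: in_Lp_iff)
  define W where "W = Wn p u"
  have eq: "Wn p (Top u) = ennreal (cmod l powr p) * W"
  proof -
    have "Wn p (Top u) = (\<integral>\<^sup>+x. ennreal (cmod l powr p) * (ennreal (psi p x) * ennreal (cmod (u x) powr p)) \<partial>mu)"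
      unfolding Wn_def
    proof (rule nn_integral_cong_AE)
      show "AE x in mu. ennreal (psi p x) * ennreal (cmod (Top u x) powr p) = ennreal (cmod l powr p) * (ennreal (psi p x) * ennreal (cmod (u x) powr p))"
        using ae
      proof (rule AE_mp)
        show "AE x in mu. Top u x - l * u x = 0 \<longrightarrow> ennreal (psi p x) * ennreal (cmod (Top u x) powr p) = ennreal (cmod l powr p) * (ennreal (psi p x) * ennreal (cmod (u x) powr p))"
        proof (intro AE_I2 impI)
          fix x assume "Top u x - l * u x = 0"
          then have "Top u x = l * u x" by simp
          then have "cmod (Top u x) powr p = cmod l powr p * cmod (u x) powr p" by (simp add: norm_mult powr_mult)
          then show "ennreal (psi p x) * ennreal (cmod (Top u x) powr p) = ennreal (cmod l powr p) * (ennreal (psi p x) * ennreal (cmod (u x) powr p))"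
            by (simp add: ennreal_mult ac_simps)
        qed
      qed
    qed
    also have "\<dots> = ennreal (cmod l powr p) * W" unfolding W_def Wn_def
      by (rule nn_integral_cmult) (simp add: measurable_mu_iff)
    finally show ?thesis .
  qed
  have le: "ennreal (cmod l powr p) * W \<le> ennreal (gg powr p) * W"
    using KEY'[OF um p] unfolding eq W_def .
  have Wfin: "W < \<infinity>" unfolding W_def using Wn_le_In[of p u] p ui by (meson le_less_trans less_imp_le order.trans zero_le_one)
  have W0: "W = 0"
  proof (rule ccontr)
    assume "W \<noteq> 0"
    from Wfin obtain w where w: "W = ennreal w" "0 \<le> w" by (cases W) auto
    with \<open>W \<noteq> 0\<close> have w0: "0 < w" by auto
    have "ennreal (cmod l powr p * w) \<le> ennreal (gg powr p * w)" using le w by (simp add: ennreal_mult)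
    then have "cmod l powr p * w \<le> gg powr p * w" using w0 gg_pos by (simp add: ennreal_le_iff)
    then have "cmod l powr p \<le> gg powr p" using w0 by simp
    moreover have "gg powr p < cmod l powr p" using l gg_pos p by (intro powr_less_mono2) auto
    ultimately show False by simp
  qed
  then have "AE x in mu. ennreal (psi p x) * ennreal (cmod (u x) powr p) = 0"
    unfolding W_def Wn_def by (subst (asm) nn_integral_0_iff_AE) (auto simp: measurable_mu_iff)
  then show ?thesis
  proof (rule AE_mp)
    show "AE x in mu. ennreal (psi p x) * ennreal (cmod (u x) powr p) = 0 \<longrightarrow> u x = 0"
      using psi_pos[of p] by (intro AE_I2) (auto simp: ennreal_mult'[symmetric] less_imp_le)
  qed
qed

lemma iter_step:
  assumes "0 < x" "x \<le> 1"
  shows "(Top ^^ Suc n) f x = complex_of_real x * (Top ^^ n) f (frac (1/x))"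
  using assms by (simp add: Top_def)

lemma TT_meas[measurable]:
  assumes [measurable]: "f \<in> borel_measurable borel"
  shows "(Top ^^ n) f \<in> borel_measurable borel"
  by (induction n) auto

lemma TT_Wn:
  assumes [measurable]: "f \<in> borel_measurable borel" and p: "1 \<le> p"
  shows "Wn p ((Top ^^ n) f) \<le> ennreal (gg powr p) ^ n * Wn p f"
proof (induction n)
  case 0
  then show ?case by simp
next
  case (Suc n)
  have "Wn p ((Top ^^ Suc n) f) = Wn p (Top ((Top ^^ n) f))" by simp
  also have "\<dots> \<le> ennreal (gg powr p) * Wn p ((Top ^^ n) f)" by (rule KEY'[OF _ p]) simp
  also have "\<dots> \<le> ennreal (gg powr p) * (ennreal (gg powr p) ^ n * Wn p f)"
    using Suc by (intro mult_left_mono) auto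
  finally show ?case by (simp add: mult.assoc)
qed

lemma series_identity:
  assumes x: "0 < x" "x \<le> 1" and l: "l \<noteq> 0"
    and sa: "summable (\<lambda>n. (Top ^^ n) f x / l ^ n)"
  defines "U \<equiv> \<lambda>y. - (\<Sum>n. (Top ^^ n) f y / l ^ Suc n)"
  shows "Top U x - l * U x = f x"
proof -
  define a where "a n = (Top ^^ n) f x / l ^ n" for n
  have sa: "summable a" using sa unfolding a_def .
  have sa': "summable (\<lambda>n. a (Suc n))" using sa by (simp add: summable_Suc_iff)
  have xn: "complex_of_real x \<noteq> 0" using x by simp
  have h1: "(Top ^^ n) f (frac (1/x)) / l ^ Suc n = a (Suc n) / complex_of_real x" for n
    unfolding a_def iter_step[OF x] using xn by simp
  have UG: "U (frac (1/x)) = - ((\<Sum>n. a (Suc n)) / complex_of_real x)"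
    unfolding U_def h1 suminf_divide[OF sa'] ..
  have T: "Top U x = - (\<Sum>n. a (Suc n))"
    using x xn unfolding Top_def UG by simp
  have h2: "(Top ^^ n) f x / l ^ Suc n = a n / l" for n unfolding a_def by simp
  have Ux: "U x = - (suminf a / l)" unfolding U_def h2 suminf_divide[OF sa] ..
  have lU: "l * U x = - suminf a" unfolding Ux using l by simp
  have "a 0 = f x" unfolding a_def by simp
  then show ?thesis unfolding T lU using suminf_split_head[OF sa] by simp
qed

lemma pow_powr: "0 \<le> (x::real) \<Longrightarrow> (x ^ n) powr p = (x powr p) ^ n"
  by (induction n) (auto simp: powr_mult)

lemma int_le_wint:
  fixes G :: "real \<Rightarrow> ennreal"
  assumes [measurable]: "G \<in> borel_measurable borel" and p: "0 \<le> p"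
  shows "(\<integral>\<^sup>+x. G x \<partial>mu) \<le> ennreal (3 powr p) * (\<integral>\<^sup>+x. ennreal (psi p x) * G x \<partial>mu)"
proof -
  have "(\<integral>\<^sup>+x. G x \<partial>mu) \<le> (\<integral>\<^sup>+x. ennreal (3 powr p) * (ennreal (psi p x) * G x) \<partial>mu)"
  proof (rule nn_integral_mono)
    fix x
    have "(1/3) powr p \<le> psi p x" using psi_bounds[OF p] by blast
    then have "3 powr p * (1/3) powr p \<le> 3 powr p * psi p x" by (intro mult_left_mono) auto
    moreover have "3 powr p * (1/3) powr p = 1" by (simp add: powr_divide)
    ultimately have "1 \<le> 3 powr p * psi p x" by simp
    then have "ennreal 1 * G x \<le> ennreal (3 powr p * psi p x) * G x"
      by (intro mult_right_mono ennreal_leI) auto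
    then show "G x \<le> ennreal (3 powr p) * (ennreal (psi p x) * G x)"
      using psi_pos[of p x] by (simp add: ennreal_mult mult.assoc)
  qed
  also have "\<dots> = ennreal (3 powr p) * (\<integral>\<^sup>+x. ennreal (psi p x) * G x \<partial>mu)"
    by (rule nn_integral_cmult) (simp add: measurable_mu_iff)
  finally show ?thesis .
qed

lemma AE_mu_01: "AE x in mu. 0 < x \<and> x < 1"
proof -
  have "AE x in lborel. 0 < ennreal (rho x) \<longrightarrow> 0 < x \<and> x < 1"
  proof (intro AE_I2 impI)
    fix x assume "0 < ennreal (rho x)"
    then have r: "0 < rho x" by simp
    have x01: "x \<in> {0..1}"
    proof (rule ccontr)
      assume "x \<notin> {0..1}"
      then have "rho x = 0" unfolding rho_def by simp
      with r show False by simp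
    qed
    have "x \<noteq> 0" "x \<noteq> 1" using r unfolding rho_def by auto
    then show "0 < x \<and> x < 1" using x01 by auto
  qed
  then show ?thesis unfolding mu_eq by (subst AE_density) auto
qed

lemma coeff_bound:
  assumes p: "1 \<le> p" and E: "(\<Sum>n. ennreal (b n powr p)) \<noteq> \<infinity>" and b: "\<And>n. 0 \<le> b n"
  shows "b n \<le> enn2real (\<Sum>n. ennreal (b n powr p)) powr (1/p)"
proof -
  define S where "S = (\<Sum>n. ennreal (b n powr p))"
  have "ennreal (b n powr p) \<le> S" unfolding S_def by (rule enn_le_suminf)
  moreover have "S < top" using E unfolding S_def by (simp add: less_top)
  ultimately have "enn2real (ennreal (b n powr p)) \<le> enn2real S" by (rule enn2real_mono)
  then have "b n powr p \<le> enn2real S" by simp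
  then have "(b n powr p) powr (1/p) \<le> enn2real S powr (1/p)"
    using p by (intro powr_mono2) auto
  moreover have "(b n powr p) powr (1/p) = b n" using p b[of n] by (simp add: powr_powr)
  ultimately show ?thesis unfolding S_def by simp
qed

lemma surj_part:
  assumes p: "1 \<le> p" and l: "gg < cmod l" and f: "in_Lp p f"
  shows "\<exists>u. in_Lp p u \<and> (AE x in mu. Top u x - l * u x = f x)"
proof -
  have fm[measurable]: "f \<in> borel_measurable borel" and fi: "In p f < \<infinity>" using f by (auto simp: in_Lp_iff)
  define L where "L = cmod l"
  define r0 where "r0 = (L + gg)/2"
  have L0: "gg < L" "0 < L" using l gg_pos unfolding L_def by auto
  have r0: "gg < r0" "r0 < L" "0 < r0" using L0 gg_pos unfolding r0_def by auto
  have l0: "l \<noteq> 0" using L0 unfolding L_def by auto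
  define b where "b n x = cmod ((Top ^^ n) f x) * (1/r0)^n" for n x
  define E where "E x = (\<Sum>n. ennreal (b n x powr p))" for x
  have Em[measurable]: "E \<in> borel_measurable borel" unfolding E_def b_def by measurable
  define k where "k = (1/r0) powr p"
  define q where "q = k * gg powr p"
  have k0: "0 \<le> k" unfolding k_def by simp
  have q0: "0 \<le> q" unfolding q_def k_def by simp
  have q1: "q < 1"
  proof -
    have "q = (gg/r0) powr p" unfolding q_def k_def using r0 gg_pos by (simp add: powr_mult[symmetric])
    also have "\<dots> < 1 powr p" using r0 gg_pos p by (intro powr_less_mono2) auto
    finally show ?thesis by simp
  qed
  have bpow: "b n x powr p = k^n * cmod ((Top^^n) f x) powr p" for n x
    unfolding b_def k_def using r0 by (simp add: powr_mult pow_powr)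
  have A: "(\<integral>\<^sup>+x. ennreal (psi p x) * E x \<partial>mu) \<le> ennreal (1/(1-q)) * Wn p f"
  proof -
    have "(\<integral>\<^sup>+x. ennreal (psi p x) * E x \<partial>mu) = (\<integral>\<^sup>+x. (\<Sum>n. ennreal (psi p x) * ennreal (b n x powr p)) \<partial>mu)"
      unfolding E_def by simp
    also have "\<dots> = (\<Sum>n. \<integral>\<^sup>+x. ennreal (psi p x) * ennreal (b n x powr p) \<partial>mu)"
      by (rule nn_integral_suminf) (simp add: measurable_mu_iff b_def)
    also have "\<dots> = (\<Sum>n. ennreal (k^n) * Wn p ((Top^^n) f))"
    proof (rule suminf_cong)
      fix n
      have "(\<integral>\<^sup>+x. ennreal (psi p x) * ennreal (b n x powr p) \<partial>mu)
          = (\<integral>\<^sup>+x. ennreal (k^n) * (ennreal (psi p x) * ennreal (cmod ((Top^^n) f x) powr p)) \<partial>mu)"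
        unfolding bpow using k0 by (simp add: ennreal_mult ac_simps)
      also have "\<dots> = ennreal (k^n) * Wn p ((Top^^n) f)" unfolding Wn_def
        by (rule nn_integral_cmult) (simp add: measurable_mu_iff)
      finally show "(\<integral>\<^sup>+x. ennreal (psi p x) * ennreal (b n x powr p) \<partial>mu) = ennreal (k^n) * Wn p ((Top^^n) f)" .
    qed
    also have "\<dots> \<le> (\<Sum>n. ennreal (q^n) * Wn p f)"
    proof (intro suminf_le summableI)
      fix n
      have "ennreal (k^n) * Wn p ((Top^^n) f) \<le> ennreal (k^n) * (ennreal (gg powr p) ^ n * Wn p f)"
        by (intro mult_left_mono TT_Wn[OF fm p]) auto
      also have "\<dots> = ennreal (q^n) * Wn p f"
        unfolding q_def using k0 by (simp add: ennreal_power ennreal_mult power_mult_distrib mult.assoc)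
      finally show "ennreal (k^n) * Wn p ((Top^^n) f) \<le> ennreal (q^n) * Wn p f" .
    qed
    also have "\<dots> = (\<Sum>n. ennreal (q^n)) * Wn p f" by simp
    also have "(\<Sum>n. ennreal (q^n)) = ennreal (1/(1-q))"
      using q0 q1 by (subst suminf_ennreal2) (auto simp: suminf_geometric)
    finally show ?thesis .
  qed
  have Efin: "(\<integral>\<^sup>+x. E x \<partial>mu) < \<infinity>"
  proof -
    have "(\<integral>\<^sup>+x. E x \<partial>mu) \<le> ennreal (3 powr p) * (\<integral>\<^sup>+x. ennreal (psi p x) * E x \<partial>mu)"
      using p by (intro int_le_wint) auto
    also have "\<dots> \<le> ennreal (3 powr p) * (ennreal (1/(1-q)) * Wn p f)"
      using A by (intro mult_left_mono) auto
    also have "\<dots> < \<infinity>"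
    proof -
      have "Wn p f < \<infinity>" using Wn_le_In[of p f] p fi by (meson le_less_trans less_imp_le order.trans zero_le_one)
      then show ?thesis by (simp add: ennreal_mult_less_top)
    qed
    finally show ?thesis .
  qed
  have AE_E: "AE x in mu. E x \<noteq> \<infinity>"
    by (rule nn_integral_PInf_AE) (use Efin in \<open>auto simp: measurable_mu_iff\<close>)
  define M where "M x = enn2real (E x) powr (1/p)" for x
  have cb: "cmod ((Top^^n) f x) \<le> M x * r0^n" if Ex: "E x \<noteq> \<infinity>" for n x
  proof -
    have "b n x \<le> M x" unfolding M_def E_def
      by (rule coeff_bound[OF p]) (use Ex r0 in \<open>auto simp: E_def b_def\<close>)
    then have "b n x * r0^n \<le> M x * r0^n" using r0 by (intro mult_right_mono) auto
    moreover have "b n x * r0^n = cmod ((Top^^n) f x)" unfolding b_def using r0 by (simp add: power_one_over)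
    ultimately show ?thesis by simp
  qed
  define U where "U = (\<lambda>y. - (\<Sum>n. (Top ^^ n) f y / l ^ Suc n))"
  have Um[measurable]: "U \<in> borel_measurable borel" unfolding U_def by measurable
  have summ: "summable (\<lambda>n. (Top ^^ n) f x / l ^ n) \<and> cmod (U x) \<le> M x / (L - r0)" if Ex: "E x \<noteq> \<infinity>" for x
  proof -
    have M0: "0 \<le> M x" unfolding M_def by simp
    have rl: "norm (r0 / L) < 1" using r0 by simp
    have nb: "norm ((Top ^^ n) f x / l ^ Suc n) \<le> (M x / L) * (r0/L)^n" for n
    proof -
      have "norm ((Top ^^ n) f x / l ^ Suc n) = cmod ((Top ^^ n) f x) / L ^ Suc n"
        unfolding L_def by (simp add: norm_divide norm_power norm_mult)
      also have "\<dots> \<le> M x * r0^n / L ^ Suc n" using cb[OF Ex] L0 by (intro divide_right_mono) auto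
      also have "\<dots> = (M x / L) * (r0/L)^n" using L0 by (simp add: power_divide field_simps)
      finally show ?thesis .
    qed
    have sg: "summable (\<lambda>n. (M x / L) * (r0/L)^n)" using rl by (intro summable_mult summable_geometric) auto
    have s1: "summable (\<lambda>n. norm ((Top ^^ n) f x / l ^ Suc n))"
      by (rule summable_comparison_test[OF _ sg]) (use nb in auto)
    have "summable (\<lambda>n. (Top ^^ n) f x / l ^ Suc n)" by (rule summable_norm_cancel[OF s1])
    then have "summable (\<lambda>n. l * ((Top ^^ n) f x / l ^ Suc n))" by (rule summable_mult)
    moreover have "l * ((Top ^^ n) f x / l ^ Suc n) = (Top ^^ n) f x / l ^ n" for n using l0 by simp
    ultimately have sA: "summable (\<lambda>n. (Top ^^ n) f x / l ^ n)" by simp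
    have "cmod (U x) = norm (\<Sum>n. (Top ^^ n) f x / l ^ Suc n)" unfolding U_def by simp
    also have "\<dots> \<le> (\<Sum>n. norm ((Top ^^ n) f x / l ^ Suc n))" by (rule summable_norm[OF s1])
    also have "\<dots> \<le> (\<Sum>n. (M x / L) * (r0/L)^n)" by (rule suminf_le[OF nb s1 sg])
    also have "\<dots> = (M x / L) * (1 / (1 - r0/L))"
      by (subst suminf_mult[OF summable_geometric[OF rl]]) (simp only: suminf_geometric[OF rl])
    also have "\<dots> = M x / (L - r0)" using L0 r0 by (simp add: field_simps)
    finally show ?thesis using sA by simp
  qed
  define c where "c = (1/(L - r0)) powr p"
  have UL: "in_Lp p U"
  proof -
    have "In p U \<le> (\<integral>\<^sup>+x. ennreal c * E x \<partial>mu)"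
      unfolding In_def
    proof (rule nn_integral_mono_AE)
      show "AE x in mu. ennreal (cmod (U x) powr p) \<le> ennreal c * E x"
        using AE_E
      proof (rule AE_mp, intro AE_I2 impI)
        fix x assume Ex: "E x \<noteq> \<infinity>"
        have "cmod (U x) powr p \<le> (M x / (L - r0)) powr p"
          using summ[OF Ex] p by (intro powr_mono2) auto
        also have "\<dots> = M x powr p * c" unfolding c_def using r0 by (simp add: powr_divide divide_inverse powr_mult)
        also have "M x powr p = enn2real (E x)" unfolding M_def using p by (simp add: powr_powr)
        finally have "cmod (U x) powr p \<le> enn2real (E x) * c" .
        then have "ennreal (cmod (U x) powr p) \<le> ennreal (enn2real (E x) * c)" by (rule ennreal_leI)
        also have "\<dots> = ennreal c * E x" using Ex unfolding c_def by (simp add: ennreal_mult less_top mult.commute)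
        finally show "ennreal (cmod (U x) powr p) \<le> ennreal c * E x" .
      qed
    qed
    also have "\<dots> = ennreal c * (\<integral>\<^sup>+x. E x \<partial>mu)" by (rule nn_integral_cmult) (simp add: measurable_mu_iff)
    also have "\<dots> < \<infinity>" using Efin by (simp add: ennreal_mult_less_top)
    finally show ?thesis unfolding in_Lp_iff using Um by simp
  qed
  have "AE x in mu. Top U x - l * U x = f x"
    using AE_E AE_mu_01
  proof (eventually_elim)
    case (elim x)
    then show ?case unfolding U_def
      by (intro series_identity l0) (use summ[of x] in auto)
  qed
  then show ?thesis using UL by blast
qed

theorem proposition4p6:
  fixes p :: real
  assumes "p \<ge> 1"
  shows "bounded_on_Lp p Top \<and> Lp_spectral_radius p Top \<le> ereal ((sqrt 5 - 1) / 2)"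
proof
  show "bounded_on_Lp p Top" by (rule bounded_Top) (use assms in simp)
  show "Lp_spectral_radius p Top \<le> ereal ((sqrt 5 - 1) / 2)"
    unfolding Lp_spectral_radius_def gg_def[symmetric]
  proof (rule SUP_least)
    fix l assume "l \<in> Lp_spectrum p Top"
    then have ni: "\<not> invertible_on_Lp p (\<lambda>u x. Top u x - l * u x)" unfolding Lp_spectrum_def by simp
    show "ereal (cmod l) \<le> ereal gg"
    proof (rule ccontr)
      assume "\<not> ereal (cmod l) \<le> ereal gg"
      then have l: "gg < cmod l" by simp
      have "invertible_on_Lp p (\<lambda>u x. Top u x - l * u x)"
        unfolding invertible_on_Lp_def
      proof (intro conjI allI impI)
        fix u assume "in_Lp p u \<and> (AE x in mu. Top u x - l * u x = 0)"
        then show "AE x in mu. u x = 0" using inj_part[of p l u] assms l by auto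
      next
        fix f assume "in_Lp p f"
        then show "\<exists>u. in_Lp p u \<and> (AE x in mu. Top u x - l * u x = f x)"
          using surj_part[of p l f] assms l by auto
      qed
      with ni show False by simp
    qed
  qed
qed

end
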